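(* Let $\mathcal{G}$ be a connected $k$-uniform hypergraph with $n$ vertices. Then for every $j\in V(\mathcal{G})$, \[ {\rm ecc}(j)\geq \frac{k}{2(k-1)(n-1)\alpha_j(\mathcal{G})}. \]
   Context: A $k$-uniform hypergraph $\mathcal{G}$ has vertex set $V(\mathcal{G})=[n]$ and edge set $E(\mathcal{G})$ of $k$-element subsets of $V(\mathcal{G})$. A path of length $l$ is an alternating sequence $v_0e_1v_1\cdots e_lv_l$ of distinct vertices and distinct edges with $v_{i-1},v_i\in e_i$; $\mathcal{G}$ is connected if any two vertices are joined by a path. The distance $d(u,v)$ is the length of a shortest path between $u$ and $v$, and ${\rm ecc}(v)=\max_{u\in V(\mathcal{G})}d(u,v)$. For $\mathbf{x}\in\mathbb{R}^n$, $\mathcal{L}_\mathcal{G}\mathbf{x}^k=\sum_{\{i_1,\ldots,i_k\}\in E(\mathcal{G})}\left(x_{i_1}^k+\cdots+x_{i_k}^k-k\,x_{i_1}\cdots x_{i_k}\right)$, and the inverse Perron value of vertex $j$ is $\alpha_j(\mathcal{G})=\min\{\mathcal{L}_\mathcal{G}\mathbf{x}^k : \mathbf{x}\in\mathbb{R}^n_+,\ \sum_{i=1}^n x_i^k=1,\ x_j=0\}$. *)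

theory Defs
  imports "HOL-Analysis.Analysis"
begin

definition uniform_hypergraph :: "nat \<Rightarrow> nat \<Rightarrow> nat set set \<Rightarrow> bool" where
  "uniform_hypergraph n k E \<longleftrightarrow> k \<ge> 2 \<and> (\<forall>e\<in>E. e \<subseteq> {1..n} \<and> card e = k)"

definition is_path :: "nat set set \<Rightarrow> nat list \<Rightarrow> nat set list \<Rightarrow> bool" where
  "is_path E vs es \<longleftrightarrow> length vs = Suc (length es) \<and> distinct vs \<and> distinct es \<and>
     set es \<subseteq> E \<and> (\<forall>i<length es. vs ! i \<in> es ! i \<and> vs ! Suc i \<in> es ! i)"

definition joins :: "nat set set \<Rightarrow> nat \<Rightarrow> nat \<Rightarrow> nat \<Rightarrow> bool" where
  "joins E u v l \<longleftrightarrow> (\<exists>vs es. is_path E vs es \<and> hd vs = u \<and> last vs = v \<and> length es = l)"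

definition hg_connected :: "nat \<Rightarrow> nat set set \<Rightarrow> bool" where
  "hg_connected n E \<longleftrightarrow> (\<forall>u\<in>{1..n}. \<forall>v\<in>{1..n}. \<exists>l. joins E u v l)"

definition hg_dist :: "nat set set \<Rightarrow> nat \<Rightarrow> nat \<Rightarrow> nat" where
  "hg_dist E u v = (LEAST l. joins E u v l)"

definition ecc :: "nat \<Rightarrow> nat set set \<Rightarrow> nat \<Rightarrow> nat" where
  "ecc n E v = Max {hg_dist E u v | u. u \<in> {1..n}}"

definition lap_form :: "nat \<Rightarrow> nat set set \<Rightarrow> (nat \<Rightarrow> real) \<Rightarrow> real" where
  "lap_form k E x = (\<Sum>e\<in>E. (\<Sum>i\<in>e. x i ^ k) - real k * (\<Prod>i\<in>e. x i))"

text \<open>Inverse Perron value of vertex j (the minimum, written as an infimum).\<close>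
definition inv_perron :: "nat \<Rightarrow> nat \<Rightarrow> nat set set \<Rightarrow> nat \<Rightarrow> real" where
  "inv_perron n k E j = Inf {lap_form k E x | x.
      (\<forall>i\<in>{1..n}. x i \<ge> 0) \<and> (\<Sum>i\<in>{1..n}. x i ^ k) = 1 \<and> x j = 0}"

end

theory Submission
  imports Defs
begin

lemma amgm_k:
  fixes c :: "nat \<Rightarrow> real"
  assumes "finite S" "card S = k" "k > 0" "\<And>i. i \<in> S \<Longrightarrow> c i \<ge> 0"
  shows "real k * prod c S \<le> (\<Sum>i\<in>S. c i ^ k)"
proof -
  have ne: "S \<noteq> {}" using assms by auto
  have P: "prod c S \<ge> 0" using assms by (simp add: prod_nonneg)
  have "(\<Sum>i\<in>S. c i ^ k / card S) \<ge> (\<Prod>i\<in>S. c i ^ k) powr (1 / card S)"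
    by (rule arith_geom_mean) (use assms ne in auto)
  moreover have "(\<Prod>i\<in>S. c i ^ k) = (prod c S) ^ k" by (simp add: prod_power_distrib)
  moreover have "((prod c S) ^ k) powr (1 / real k) = prod c S"
  proof (cases "prod c S = 0")
    case True
    then have "prod c S ^ k = 0" using assms by simp
    then show ?thesis using True by simp
  next
    case False
    then have pos: "prod c S > 0" using P by simp
    have "((prod c S) ^ k) powr (1 / real k) = ((prod c S) powr (real k)) powr (1 / real k)"
      using pos by (simp add: powr_realpow)
    also have "\<dots> = prod c S" using pos assms by (simp add: powr_powr)
    finally show ?thesis .
  qed
  ultimately have "(\<Sum>i\<in>S. c i ^ k / real k) \<ge> prod c S" using assms by simp
  moreover have "(\<Sum>i\<in>S. c i ^ k / real k) = (\<Sum>i\<in>S. c i ^ k) / real k"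
    by (simp add: sum_divide_distrib)
  ultimately show ?thesis using assms by (simp add: field_simps)
qed

lemma edge_bound:
  fixes y :: "nat \<Rightarrow> real"
  assumes "finite e" "card e = k" "k \<ge> 2" "\<And>i. i \<in> e \<Longrightarrow> y i \<ge> 0"
    and "a \<in> e" "b \<in> e" "a \<noteq> b"
  shows "(sqrt (y a ^ k) - sqrt (y b ^ k))^2 \<le> (\<Sum>i\<in>e. y i ^ k) - real k * prod y e"
proof -
  define w where "w = sqrt (y a * y b)"
  define c where "c i = (if i = a \<or> i = b then w else y i)" for i
  have ya: "y a \<ge> 0" and yb: "y b \<ge> 0" using assms by auto
  have w0: "w \<ge> 0" unfolding w_def using ya yb by simp
  have ww: "w * w = y a * y b" unfolding w_def using ya yb by (simp add: mult_nonneg_nonneg)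
  have e_eq: "e = insert a (insert b (e - {a,b}))" using assms by auto
  have fin': "finite (e - {a,b})" using assms by simp
  have "prod c e = c a * (c b * prod c (e - {a,b}))"
    using assms by (subst e_eq) (simp add: prod.insert)
  also have "\<dots> = w * w * prod y (e - {a,b})"
    by (simp add: c_def assms(7))
  also have "\<dots> = y a * (y b * prod y (e - {a,b}))" using ww by simp
  also have "\<dots> = prod y e" using assms by (subst (2) e_eq) (simp add: prod.insert)
  finally have pc: "prod c e = prod y e" .
  have "(\<Sum>i\<in>e. c i ^ k) = c a ^ k + (c b ^ k + (\<Sum>i\<in>e - {a,b}. c i ^ k))"
    using assms by (subst e_eq) (simp add: sum.insert)
  also have "\<dots> = w ^ k + w ^ k + (\<Sum>i\<in>e - {a,b}. y i ^ k)"
    using assms(7) by (simp add: c_def)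
  finally have sc: "(\<Sum>i\<in>e. c i ^ k) = w ^ k + w ^ k + (\<Sum>i\<in>e - {a,b}. y i ^ k)" .
  have sy: "(\<Sum>i\<in>e. y i ^ k) = y a ^ k + y b ^ k + (\<Sum>i\<in>e - {a,b}. y i ^ k)"
    using assms by (subst e_eq) (simp add: sum.insert)
  have am: "real k * prod c e \<le> (\<Sum>i\<in>e. c i ^ k)"
    by (rule amgm_k) (use assms w0 in \<open>auto simp: c_def\<close>)
  have wk: "w ^ k = sqrt (y a ^ k) * sqrt (y b ^ k)"
    unfolding w_def by (simp add: real_sqrt_power power_mult_distrib real_sqrt_mult)
  have sa: "sqrt (y a ^ k) ^ 2 = y a ^ k" using ya by simp
  have sb: "sqrt (y b ^ k) ^ 2 = y b ^ k" using yb by simp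
  have "(sqrt (y a ^ k) - sqrt (y b ^ k))^2 = y a ^ k + y b ^ k - 2 * w ^ k"
    unfolding wk power2_diff sa sb by simp
  then show ?thesis using am pc sc sy by simp
qed

lemma edge_nonneg:
  fixes y :: "nat \<Rightarrow> real"
  assumes "finite e" "card e = k" "k \<ge> 2" "\<And>i. i \<in> e \<Longrightarrow> y i \<ge> 0"
  shows "0 \<le> (\<Sum>i\<in>e. y i ^ k) - real k * prod y e"
  using amgm_k[of e k y] assms by simp

lemma telescope_cs:
  fixes f :: "nat \<Rightarrow> real"
  shows "(f 0 - f l)^2 \<le> real l * (\<Sum>i<l. (f i - f (Suc i))^2)"
proof -
  have "(\<Sum>i<l. (f i - f (Suc i)) * 1)^2 \<le> (\<Sum>i<l. (f i - f (Suc i))^2) * (\<Sum>i<l. 1^2)"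
    by (rule Cauchy_Schwarz_ineq_sum)
  moreover have "(\<Sum>i<l. (f i - f (Suc i))) = f 0 - f l"
    by (rule sum_lessThan_telescope')
  ultimately show ?thesis by (simp add: mult.commute)
qed

theorem theorem3p4:
  fixes n k :: nat and E :: "nat set set" and j :: nat
  assumes "uniform_hypergraph n k E"
    and "hg_connected n E"
    and "j \<in> {1..n}"
  shows "real (ecc n E j) \<ge> real k / (2 * (real k - 1) * (real n - 1) * inv_perron n k E j)"
proof (cases "n \<ge> 2")
  case False
  then have "n = 1" using assms(3) by auto
  then show ?thesis by simp
next
  case n2: True
  have k2: "k \<ge> 2" and Eprop: "\<And>e. e \<in> E \<Longrightarrow> e \<subseteq> {1..n} \<and> card e = k"
    using assms(1) unfolding uniform_hypergraph_def by auto
  have finE: "finite E" by (rule finite_subset[of E "Pow {1..n}"]) (use Eprop in auto)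
  define D where "D = ecc n E j"
  define X where "X = {lap_form k E x | x.
      (\<forall>i\<in>{1..n}. x i \<ge> 0) \<and> (\<Sum>i\<in>{1..n}. x i ^ k) = 1 \<and> x j = 0}"
  have key: "D \<ge> 1 \<and> lap_form k E x \<ge> 1 / ((real n - 1) * real D)"
    if x0: "\<forall>i\<in>{1..n}. x i \<ge> 0" and xs: "(\<Sum>i\<in>{1..n}. x i ^ k) = 1" and xj: "x j = 0" for x
  proof -
    define S where "S = {1..n} - {j}"
    have cS: "card S = n - 1" unfolding S_def using assms(3) by simp
    have finS: "finite S" unfolding S_def by simp
    have "(\<Sum>i\<in>{1..n}. x i ^ k) = x j ^ k + (\<Sum>i\<in>S. x i ^ k)"
      unfolding S_def using assms(3) by (simp add: sum.remove)
    moreover have "x j ^ k = 0" using xj k2 by simp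
    ultimately have sS: "(\<Sum>i\<in>S. x i ^ k) = 1" using xs by simp
    obtain u where uS: "u \<in> S" and ub: "x u ^ k \<ge> 1 / (real n - 1)"
    proof (rule ccontr)
      assume "\<not> thesis"
      then have lt: "\<And>u. u \<in> S \<Longrightarrow> x u ^ k < 1 / (real n - 1)" using that by force
      have "S \<noteq> {}" using cS n2 by auto
      then have "(\<Sum>i\<in>S. x i ^ k) < (\<Sum>i\<in>S. 1 / (real n - 1))"
        using finS lt by (intro sum_strict_mono) auto
      also have "\<dots> = 1" using cS n2 by (simp add: of_nat_diff)
      finally show False using sS by simp
    qed
    have u1n: "u \<in> {1..n}" and uj: "u \<noteq> j" using uS unfolding S_def by auto
    define l where "l = hg_dist E u j"
    have "\<exists>l. joins E u j l" using assms(2) assms(3) u1n unfolding hg_connected_def by blast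
    then have jl: "joins E u j l" unfolding l_def hg_dist_def by (rule LeastI_ex)
    have lD: "l \<le> D" unfolding D_def ecc_def l_def
      by (rule Max_ge) (use u1n in auto)
    obtain vs es where p: "is_path E vs es" and hd: "hd vs = u" and lst: "last vs = j"
      and les: "length es = l" using jl unfolding joins_def by blast
    have lvs: "length vs = Suc l" and dvs: "distinct vs" and des: "distinct es"
      and ses: "set es \<subseteq> E" and inE: "\<And>i. i < l \<Longrightarrow> vs ! i \<in> es ! i \<and> vs ! Suc i \<in> es ! i"
      using p les unfolding is_path_def by auto
    have hd0: "vs ! 0 = u" using hd lvs by (metis hd_conv_nth list.size(3) nat.distinct(1))
    have lstl: "vs ! l = j" using lst lvs by (metis diff_Suc_1 last_conv_nth list.size(3) nat.distinct(1))
    have l0: "l \<noteq> 0" using hd0 lstl uj by (cases l) auto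
    define z where "z i = sqrt (x i ^ k)" for i
    define f where "f i = z (vs ! i)" for i
    define T where "T e = (\<Sum>i\<in>e. x i ^ k) - real k * prod x e" for e
    have Tnn: "T e \<ge> 0" if "e \<in> E" for e
      unfolding T_def using Eprop[OF that] x0 k2
      by (intro edge_nonneg[where k=k]) (auto intro: finite_subset)
    have step: "(f i - f (Suc i))^2 \<le> T (es ! i)" if "i < l" for i
    proof -
      have eE: "es ! i \<in> E" using ses les that by auto
      have ne: "vs ! i \<noteq> vs ! Suc i" using dvs lvs that by (simp add: nth_eq_iff_index_eq)
      show ?thesis unfolding f_def z_def T_def
        using Eprop[OF eE] x0 k2 inE[OF that] ne
        by (intro edge_bound[where k=k]) (auto intro: finite_subset)
    qed
    have f0: "f 0 = z u" and fl: "f l = 0" using hd0 lstl xj k2 by (auto simp: f_def z_def)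
    have zu: "z u ^ 2 = x u ^ k" unfolding z_def using x0 u1n by simp
    have "x u ^ k \<le> real l * (\<Sum>i<l. (f i - f (Suc i))^2)"
      using telescope_cs[of f l] f0 fl zu by simp
    also have "\<dots> \<le> real l * (\<Sum>i<l. T (es ! i))"
      using step by (intro mult_left_mono sum_mono) auto
    also have "\<dots> \<le> real l * lap_form k E x"
    proof (rule mult_left_mono)
      have "(\<Sum>i<l. T (es ! i)) = sum_list (map T es)"
        using les by (simp add: sum_list_sum_nth atLeast0LessThan)
      also have "\<dots> = sum T (set es)" using des by (simp add: sum_list_distinct_conv_sum_set)
      also have "\<dots> \<le> sum T E" using ses finE Tnn by (intro sum_mono2) auto
      also have "sum T E = lap_form k E x" unfolding T_def lap_form_def by simp
      finally show "(\<Sum>i<l. T (es ! i)) \<le> lap_form k E x" .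
    qed simp
    finally have A: "x u ^ k \<le> real l * lap_form k E x" .
    have L0: "lap_form k E x \<ge> 0" unfolding lap_form_def using Tnn T_def
      by (simp add: sum_nonneg)
    have "real l * lap_form k E x \<le> real D * lap_form k E x"
      using lD L0 by (intro mult_right_mono) auto
    with A ub have B: "1 / (real n - 1) \<le> real D * lap_form k E x" by linarith
    have D1: "D \<ge> 1" using lD l0 by simp
    have n1: "real n - 1 > 0" using n2 by simp
    have "1 / ((real n - 1) * real D) = (1 / (real n - 1)) / real D" by simp
    also have "\<dots> \<le> (real D * lap_form k E x) / real D"
      using B D1 by (intro divide_right_mono) auto
    also have "\<dots> = lap_form k E x" using D1 by simp
    finally show ?thesis using D1 by simp
  qed
  define u0 where "u0 = (if j = 1 then 2 else 1::nat)"
  have u0: "u0 \<in> {1..n}" "u0 \<noteq> j" using n2 assms(3) unfolding u0_def by auto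
  define x0 where "x0 i = (if i = u0 then 1 else (0::real))" for i
  have "(\<Sum>i\<in>{1..n}. x0 i ^ k) = (\<Sum>i\<in>{1..n}. if i = u0 then 1 else 0)"
    using k2 by (intro sum.cong) (auto simp: x0_def)
  also have "\<dots> = 1" using u0 by simp
  finally have c0: "(\<forall>i\<in>{1..n}. x0 i \<ge> 0) \<and> (\<Sum>i\<in>{1..n}. x0 i ^ k) = 1 \<and> x0 j = 0"
    using u0 by (auto simp: x0_def)
  then have "lap_form k E x0 \<in> X" unfolding X_def by blast
  then have Xne: "X \<noteq> {}" by auto
  from c0 have "D \<ge> 1" using key by blast
  then have D1: "D \<ge> 1" .
  have n1: "real n - 1 > 0" using n2 by simp
  have "1 / ((real n - 1) * real D) \<le> Inf X"
    by (rule cInf_greatest[OF Xne]) (use key in \<open>auto simp: X_def\<close>)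
  then have al: "1 / ((real n - 1) * real D) \<le> inv_perron n k E j"
    unfolding inv_perron_def X_def by simp
  define a where "a = inv_perron n k E j"
  have apos: "a > 0" using al D1 n1 unfolding a_def
    by (smt (verit) divide_pos_pos mult_pos_pos of_nat_0_less_iff less_le_trans zero_less_one)
  have "1 \<le> (real n - 1) * real D * a" using al D1 n1 unfolding a_def
    by (simp add: field_simps)
  moreover have "real k \<le> 2 * (real k - 1)" using k2 by simp
  ultimately have "real k \<le> 2 * (real k - 1) * ((real n - 1) * real D * a)"
  proof -
    assume h1: "1 \<le> (real n - 1) * real D * a" and h2: "real k \<le> 2 * (real k - 1)"
    have "2 * (real k - 1) * 1 \<le> 2 * (real k - 1) * ((real n - 1) * real D * a)"
      by (rule mult_left_mono) (use h1 k2 in auto)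
    then show ?thesis using h2 by linarith
  qed
  then have "real k / (2 * (real k - 1) * (real n - 1) * a) \<le> real D"
    using apos n1 k2 by (simp add: divide_simps mult_ac)
  then show ?thesis unfolding D_def a_def .
qed

end
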